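(* Every ordered graph $G$ with at least one edge has an edge $e$ with $\mathrm{h}_G(e)\ge \overline{d}(G)/2$.
   Context: An ordered graph is a finite simple graph $G$ equipped with a total order $\le_G$ on $E(G)$ and a total order $\le^V_G$ on $V(G)$. Let $\mathbb N=\{1,2,\dots\}$. Define $\preceq_{\mathrm{lex}}$ on $\mathbb N\times V(G)$ by $(i,v)\preceq_{\mathrm{lex}}(i',v')$ iff $i<i'$, or $i=i'$ and $v\le^V_G v'$. The height table $\mathrm{HT}(G)$ is a partially filled array indexed by $\mathbb N\times V(G)$, built by going through all $(i,v)$ in $\preceq_{\mathrm{lex}}$-increasing order and setting the entry at $(i,v)$ to be the $\le_G$-largest edge containing $v$ not yet entered into the table (blank if none remain). Every edge is entered exactly once; $\mathrm{h}_G(e)$ denotes the row of $\mathrm{HT}(G)$ containing $e$. $\overline{d}(G)=2|E(G)|/|V(G)|$ is the average degree. *)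

theory Defs
  imports Complex_Main
begin

definition ordered_graph :: "'a set \<Rightarrow> 'a rel \<Rightarrow> 'a set set \<Rightarrow> 'a set rel \<Rightarrow> bool" where
  "ordered_graph V lV E lE \<longleftrightarrow> finite V
     \<and> (\<forall>e\<in>E. \<exists>u v. u \<in> V \<and> v \<in> V \<and> u \<noteq> v \<and> e = {u, v})
     \<and> linear_order_on V lV \<and> linear_order_on E lE"

definition max_rel :: "'b rel \<Rightarrow> 'b set \<Rightarrow> 'b" where
  "max_rel r S = (THE x. x \<in> S \<and> (\<forall>y\<in>S. (y, x) \<in> r))"

definition vlist :: "'a set \<Rightarrow> 'a rel \<Rightarrow> 'a list" where
  "vlist V lV = (THE xs. set xs = V \<and> distinct xs \<and> sorted_wrt (\<lambda>x y. (x, y) \<in> lV) xs)"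

definition vpos :: "'a set \<Rightarrow> 'a rel \<Rightarrow> 'a \<Rightarrow> nat" where
  "vpos V lV v = (THE j. j < card V \<and> vlist V lV ! j = v)"

text \<open>Entry written at a cell for vertex v when R is the set of edges not yet entered.\<close>
definition cell_entry :: "'a set rel \<Rightarrow> 'a set set \<Rightarrow> 'a \<Rightarrow> 'a set option" where
  "cell_entry lE R v = (if \<exists>e\<in>R. v \<in> e then Some (max_rel lE {e\<in>R. v \<in> e}) else None)"

text \<open>Edges not yet entered before processing the k-th cell (0-based) in lex order;
  cell k is (row k div |V| + 1, vertex number k mod |V|).\<close>
primrec ht_rem :: "'a set \<Rightarrow> 'a rel \<Rightarrow> 'a set set \<Rightarrow> 'a set rel \<Rightarrow> nat \<Rightarrow> 'a set set" where
  "ht_rem V lV E lE 0 = E"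
| "ht_rem V lV E lE (Suc k) = ht_rem V lV E lE k
     - set_option (cell_entry lE (ht_rem V lV E lE k) (vlist V lV ! (k mod card V)))"

text \<open>The height table: entry at (i, v) for i \<ge> 1 and v \<in> V (None = blank).\<close>
definition HT :: "'a set \<Rightarrow> 'a rel \<Rightarrow> 'a set set \<Rightarrow> 'a set rel \<Rightarrow> nat \<Rightarrow> 'a \<Rightarrow> 'a set option" where
  "HT V lV E lE i v = (if 1 \<le> i \<and> v \<in> V
     then cell_entry lE (ht_rem V lV E lE ((i - 1) * card V + vpos V lV v)) v else None)"

definition height :: "'a set \<Rightarrow> 'a rel \<Rightarrow> 'a set set \<Rightarrow> 'a set rel \<Rightarrow> 'a set \<Rightarrow> nat" where
  "height V lV E lE e = (THE i. \<exists>v\<in>V. HT V lV E lE i v = Some e)"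

definition avg_degree :: "'a set \<Rightarrow> 'a set set \<Rightarrow> real" where
  "avg_degree V E = 2 * real (card E) / real (card V)"

end

theory Submission
  imports Defs
begin

lemma sorted_wrt_unique_aux:
  assumes "antisym r"
  shows "sorted_wrt (\<lambda>x y. (x,y)\<in>r) xs \<Longrightarrow> sorted_wrt (\<lambda>x y. (x,y)\<in>r) ys
    \<Longrightarrow> distinct xs \<Longrightarrow> distinct ys \<Longrightarrow> set xs = set ys \<Longrightarrow> xs = ys"
proof (induction xs arbitrary: ys)
  case Nil
  then show ?case by simp
next
  case (Cons x xs)
  then obtain y ys' where ys: "ys = y # ys'" by (cases ys) auto
  have "x = y"
  proof (rule ccontr)
    assume ne: "x \<noteq> y"
    have "y \<in> set xs" using Cons.prems ys ne by auto
    hence "(x,y) \<in> r" using Cons.prems(1) by simp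
    moreover have "x \<in> set ys'" using Cons.prems ys ne by auto
    hence "(y,x) \<in> r" using Cons.prems(2) ys by simp
    ultimately show False using assms ne by (meson antisymD)
  qed
  moreover have "set xs = set ys'" using Cons.prems ys \<open>x = y\<close> by auto
  ultimately show ?case using Cons ys by auto
qed

lemma sorted_wrt_exists:
  assumes "finite F" "F \<subseteq> A" "trans r" "total_on A r"
  shows "\<exists>xs. set xs = F \<and> distinct xs \<and> sorted_wrt (\<lambda>x y. (x,y)\<in>r) xs"
  using assms
proof (induction F rule: finite_induct)
  case empty
  then show ?case by simp
next
  case (insert x F)
  then obtain xs where xs: "set xs = F" "distinct xs" "sorted_wrt (\<lambda>x y. (x,y)\<in>r) xs" by auto
  define ys where "ys = filter (\<lambda>y. (y,x) \<in> r) xs @ [x] @ filter (\<lambda>y. (y,x) \<notin> r) xs"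
  have "set ys = insert x F" using xs unfolding ys_def by auto
  moreover have "distinct ys" using xs insert(2) unfolding ys_def by auto
  moreover have "sorted_wrt (\<lambda>x y. (x,y)\<in>r) ys"
    unfolding ys_def
  proof (rule iffD2[OF sorted_wrt_append], intro conjI)
    show "sorted_wrt (\<lambda>x y. (x, y) \<in> r) (filter (\<lambda>y. (y, x) \<in> r) xs)"
      using xs(3) by (simp add: sorted_wrt_filter)
    show "sorted_wrt (\<lambda>x y. (x, y) \<in> r) ([x] @ filter (\<lambda>y. (y, x) \<notin> r) xs)"
    proof -
      have "(x, y) \<in> r" if y: "y \<in> set (filter (\<lambda>y. (y, x) \<notin> r) xs)" for y
      proof -
        have "y \<in> F" "(y,x) \<notin> r" using y xs by auto
        moreover have "y \<noteq> x" using \<open>y \<in> F\<close> insert(2) by auto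
        ultimately show ?thesis using insert.prems unfolding total_on_def by blast
      qed
      moreover have "sorted_wrt (\<lambda>x y. (x, y) \<in> r) (filter (\<lambda>y. (y, x) \<notin> r) xs)"
        using xs(3) by (simp add: sorted_wrt_filter)
      ultimately show ?thesis by simp
    qed
    show "\<forall>a\<in>set (filter (\<lambda>y. (y, x) \<in> r) xs). \<forall>b\<in>set ([x] @ filter (\<lambda>y. (y, x) \<notin> r) xs). (a, b) \<in> r"
    proof (intro ballI)
      fix a b assume a: "a \<in> set (filter (\<lambda>y. (y, x) \<in> r) xs)"
        and b: "b \<in> set ([x] @ filter (\<lambda>y. (y, x) \<notin> r) xs)"
      show "(a,b) \<in> r"
      proof (cases "b = x")
        case True then show ?thesis using a by auto
      next
        case False
        hence bx: "(b,x) \<notin> r" "b \<in> F" using b xs by auto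
        have "a \<in> F" "(a,x) \<in> r" using a xs by auto
        hence "a \<noteq> b" using bx by auto
        then show ?thesis using bx \<open>a \<in> F\<close> \<open>(a,x) \<in> r\<close> insert.prems
          unfolding total_on_def trans_def by blast
      qed
    qed
  qed
  ultimately show ?case by blast
qed

lemma max_rel_in:
  assumes "finite S" "S \<noteq> {}" "S \<subseteq> A" "linear_order_on A r"
  shows "max_rel r S \<in> S"
proof -
  have tr: "trans r" and an: "antisym r" and rf: "refl_on A r" and tot: "total_on A r"
    using assms(4) unfolding order_on_defs by auto
  have ex: "S \<subseteq> A \<Longrightarrow> \<exists>x. x \<in> S \<and> (\<forall>y\<in>S. (y, x) \<in> r)"
    using assms(1,2)
  proof (induction S rule: finite_ne_induct)
    case (singleton x)
    then show ?case using rf by (auto simp: refl_on_def)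
  next
    case (insert x F)
    then obtain m where m: "m \<in> F" "\<forall>y\<in>F. (y, m) \<in> r" by auto
    have xA: "x \<in> A" and mA: "m \<in> A" using insert.prems m by auto
    show ?case
    proof (cases "(x,m) \<in> r")
      case True then show ?thesis using m by auto
    next
      case False
      hence mx: "(m,x) \<in> r" using tot xA mA unfolding total_on_def
        by (metis rf refl_on_def)
      have "\<forall>y\<in>insert x F. (y, x) \<in> r"
      proof
        fix y assume "y \<in> insert x F"
        then show "(y, x) \<in> r"
        proof
          assume "y = x" then show ?thesis using rf xA by (simp add: refl_on_def)
        next
          assume "y \<in> F" then have "(y,m) \<in> r" using m by auto
          then show ?thesis using mx tr by (meson transD)
        qed
      qed
      then show ?thesis by blast
    qed
  qed
  then obtain x where x: "x \<in> S" "\<forall>y\<in>S. (y, x) \<in> r" using assms(3) by blast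
  have "max_rel r S = x" unfolding max_rel_def
  proof (rule the_equality)
    show "x \<in> S \<and> (\<forall>y\<in>S. (y, x) \<in> r)" using x by simp
  next
    fix z assume z: "z \<in> S \<and> (\<forall>y\<in>S. (y, z) \<in> r)"
    then have "(x,z) \<in> r" "(z,x) \<in> r" using x by auto
    then show "z = x" using an by (meson antisymD)
  qed
  then show ?thesis using x by simp
qed

theorem lemma3p5:
  fixes V :: "'a set" and lV :: "'a rel" and E :: "'a set set" and lE :: "'a set rel"
  assumes "ordered_graph V lV E lE"
    and "E \<noteq> {}"
  shows "\<exists>e\<in>E. real (height V lV E lE e) \<ge> avg_degree V E / 2"
proof -
  define n where "n = card V"
  define m where "m = card E"
  define R where "R = ht_rem V lV E lE"
  define L where "L = vlist V lV"
  have finV: "finite V" and edges: "\<forall>e\<in>E. \<exists>u v. u \<in> V \<and> v \<in> V \<and> u \<noteq> v \<and> e = {u, v}"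
    and loV: "linear_order_on V lV" and loE: "linear_order_on E lE"
    using assms(1) unfolding ordered_graph_def by auto
  have EPow: "E \<subseteq> Pow V" using edges by auto
  have finE: "finite E" using finite_subset[OF EPow] finV by simp
  obtain e0 where "e0 \<in> E" using assms(2) by blast
  then obtain u0 where "u0 \<in> V" using edges by blast
  hence "V \<noteq> {}" by blast
  hence npos: "n > 0" unfolding n_def using finV by (simp add: card_gt_0_iff)
  have mpos: "m > 0" unfolding m_def using finE assms(2) by (simp add: card_gt_0_iff)
  have trV: "trans lV" and anV: "antisym lV" and totV: "total_on V lV"
    using loV unfolding order_on_defs by auto
  have ex1: "\<exists>!xs. set xs = V \<and> distinct xs \<and> sorted_wrt (\<lambda>x y. (x, y) \<in> lV) xs"
  proof (rule ex_ex1I)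
    show "\<exists>xs. set xs = V \<and> distinct xs \<and> sorted_wrt (\<lambda>x y. (x, y) \<in> lV) xs"
      using sorted_wrt_exists[OF finV subset_refl trV totV] .
  next
    fix xs ys assume "set xs = V \<and> distinct xs \<and> sorted_wrt (\<lambda>x y. (x, y) \<in> lV) xs"
      "set ys = V \<and> distinct ys \<and> sorted_wrt (\<lambda>x y. (x, y) \<in> lV) ys"
    then show "xs = ys" using sorted_wrt_unique_aux[OF anV] by auto
  qed
  have Lp: "set L = V \<and> distinct L \<and> sorted_wrt (\<lambda>x y. (x, y) \<in> lV) L"
    unfolding L_def vlist_def using theI'[OF ex1] .
  have lenL: "length L = n" unfolding n_def using Lp distinct_card by metis
  have vpos_nth: "vpos V lV (L ! j) = j" if "j < n" for j
    unfolding vpos_def n_def[symmetric] L_def[symmetric]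
  proof (rule the_equality)
    show "j < n \<and> L ! j = L ! j" using that by simp
  next
    fix i assume "i < n \<and> L ! i = L ! j"
    then show "i = j" using that Lp lenL nth_eq_iff_index_eq by metis
  qed
  have vpos_V: "vpos V lV v < n \<and> L ! (vpos V lV v) = v" if "v \<in> V" for v
  proof -
    have "v \<in> set L" using that Lp by simp
    then obtain j where "j < length L" "L ! j = v" by (auto simp: in_set_conv_nth)
    hence "j < n" "L ! j = v" using lenL by auto
    then show ?thesis using vpos_nth by auto
  qed
  have LV: "L ! j \<in> V" if "j < n" for j
  proof -
    have "L ! j \<in> set L" using that lenL by simp
    then show ?thesis using Lp by simp
  qed
  have Rstep: "R (Suc k) = R k - set_option (cell_entry lE (R k) (L ! (k mod n)))" for k
    unfolding R_def L_def n_def by simp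
  have Rdec: "R (Suc k) \<subseteq> R k" for k using Rstep by auto
  have Ranti: "R k' \<subseteq> R k" if "k \<le> k'" for k k'
    using that
  proof (induction rule: dec_induct)
    case base then show ?case by simp
  next
    case (step j) then show ?case using Rdec[of j] by blast
  qed
  have RE: "R k \<subseteq> E" for k using Ranti[of 0 k] unfolding R_def by simp
  have finR: "finite (R k)" for k using RE finE finite_subset by blast
  have cell_in: "e \<in> R k \<and> x \<in> e" if "cell_entry lE (R k) x = Some e" for k x e
  proof -
    have ne: "\<exists>e\<in>R k. x \<in> e" using that unfolding cell_entry_def by (auto split: if_splits)
    hence eq: "e = max_rel lE {e\<in>R k. x \<in> e}" using that unfolding cell_entry_def by auto
    have "max_rel lE {e\<in>R k. x \<in> e} \<in> {e\<in>R k. x \<in> e}"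
      by (rule max_rel_in[OF _ _ _ loE]) (use finR RE ne in auto)
    then show ?thesis using eq by simp
  qed
  have cell_some: "\<exists>f. cell_entry lE (R k) x = Some f" if "e \<in> R k" "x \<in> e" for k x e
    using that unfolding cell_entry_def by auto
  have card_drop: "card (R (Suc k)) + 1 \<le> card (R k)" if cd: "e \<in> R k" "L ! (k mod n) \<in> e" for k e
  proof -
    obtain f where f: "cell_entry lE (R k) (L ! (k mod n)) = Some f" using cell_some[OF cd] by blast
    have "f \<in> R k" using cell_in f by blast
    moreover have "R (Suc k) = R k - {f}" using Rstep f by simp
    ultimately show ?thesis using finR card_Diff1_less[of "R k" f] by simp
  qed
  have eventually: "\<exists>k. e \<notin> R k" if eE: "e \<in> E" for e
  proof (rule ccontr)
    assume "\<not> (\<exists>k. e \<notin> R k)"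
    hence all: "e \<in> R k" for k by blast
    obtain v where vV: "v \<in> V" and ve: "v \<in> e" using edges eE by blast
    define p where "p = vpos V lV v"
    have p: "p < n" "L ! p = v" using vpos_V vV unfolding p_def by auto
    define s where "s j = j * n + p" for j
    have smod: "L ! (s j mod n) = v" for j unfolding s_def using p by simp
    have "card (R (Suc (s J))) + J + 1 \<le> m" for J
    proof (induction J)
      case 0
      have "card (R (Suc (s 0))) + 1 \<le> card (R (s 0))" by (rule card_drop[OF all]) (simp add: smod ve)
      moreover have "card (R (s 0)) \<le> m" unfolding m_def using RE finE card_mono by blast
      ultimately show ?case by simp
    next
      case (Suc J)
      have "card (R (Suc (s (Suc J)))) + 1 \<le> card (R (s (Suc J)))"
        by (rule card_drop[OF all]) (simp add: smod ve)
      moreover have "Suc (s J) \<le> s (Suc J)" unfolding s_def using npos by simp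
      hence "card (R (s (Suc J))) \<le> card (R (Suc (s J)))"
        by (rule card_mono[OF finR Ranti])
      ultimately show ?case using Suc.IH by simp
    qed
    from this[of m] show False by simp
  qed
  have removed: "\<exists>k. e \<in> R k \<and> e \<notin> R (Suc k)" if eE: "e \<in> E" for e
  proof -
    define k0 where "k0 = (LEAST k. e \<notin> R k)"
    have k0: "e \<notin> R k0" unfolding k0_def using eventually[OF eE] by (metis LeastI)
    have "k0 \<noteq> 0"
    proof
      assume "k0 = 0" then show False using k0 eE unfolding R_def by simp
    qed
    then obtain k1 where k1: "k0 = Suc k1" by (cases k0) auto
    have "e \<in> R k1" using not_less_Least[of k1 "\<lambda>k. e \<notin> R k"] k1 unfolding k0_def by auto
    then show ?thesis using k0 k1 by blast
  qed
  have uniqk: "k = k'" if "e \<in> R k" "e \<notin> R (Suc k)" "e \<in> R k'" "e \<notin> R (Suc k')" for e k k'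
  proof (rule ccontr)
    assume "k \<noteq> k'"
    then consider "Suc k \<le> k'" | "Suc k' \<le> k" by linarith
    then show False
    proof cases
      case 1 then have "R k' \<subseteq> R (Suc k)" using Ranti by blast
      then show False using that by blast
    next
      case 2 then have "R k \<subseteq> R (Suc k')" using Ranti by blast
      then show False using that by blast
    qed
  qed
  define kk where "kk e = (THE k. e \<in> R k \<and> e \<notin> R (Suc k))" for e
  have kk: "e \<in> R (kk e) \<and> e \<notin> R (Suc (kk e))" if "e \<in> E" for e
    unfolding kk_def by (rule theI') (use removed[OF that] uniqk in blast)
  have cell_kk: "cell_entry lE (R (kk e)) (L ! (kk e mod n)) = Some e" if "e \<in> E" for e
  proof -
    have "e \<in> set_option (cell_entry lE (R (kk e)) (L ! (kk e mod n)))"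
      using kk[OF that] Rstep[of "kk e"] by auto
    then show ?thesis by (cases "cell_entry lE (R (kk e)) (L ! (kk e mod n))") auto
  qed
  have height_eq: "height V lV E lE e = kk e div n + 1" if eE: "e \<in> E" for e
    unfolding height_def
  proof (rule the_equality)
    let ?k = "kk e"
    have "?k mod n < n" using npos by simp
    hence v: "L ! (?k mod n) \<in> V" "vpos V lV (L ! (?k mod n)) = ?k mod n"
      using LV vpos_nth by auto
    have "(kk e div n + 1 - 1) * n + ?k mod n = ?k" by simp
    then show "\<exists>v\<in>V. HT V lV E lE (kk e div n + 1) v = Some e"
      using v cell_kk[OF eE] unfolding HT_def R_def[symmetric] n_def[symmetric]
      by (intro bexI[of _ "L ! (?k mod n)"]) auto
  next
    fix i assume "\<exists>v\<in>V. HT V lV E lE i v = Some e"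
    then obtain v where vV: "v \<in> V" and h: "HT V lV E lE i v = Some e" by blast
    have i1: "1 \<le> i" using h unfolding HT_def by (auto split: if_splits)
    define k' where "k' = (i - 1) * n + vpos V lV v"
    have c: "cell_entry lE (R k') v = Some e"
      using h vV i1 unfolding HT_def k'_def R_def n_def by simp
    have "k' mod n = vpos V lV v" unfolding k'_def using vpos_V[OF vV] by simp
    hence "L ! (k' mod n) = v" using vpos_V[OF vV] by simp
    hence "R (Suc k') = R k' - {e}" using Rstep[of k'] c by simp
    moreover have "e \<in> R k'" using cell_in c by blast
    ultimately have "k' = kk e" using uniqk kk[OF eE] by blast
    moreover have "k' div n = i - 1" unfolding k'_def using vpos_V[OF vV] by simp
    ultimately show "i = kk e div n + 1" using i1 by simp
  qed
  have inj: "inj_on kk E"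
  proof (rule inj_onI)
    fix e e' assume a: "e \<in> E" "e' \<in> E" "kk e = kk e'"
    have "Some e = cell_entry lE (R (kk e)) (L ! (kk e mod n))" using cell_kk[OF a(1)] by (rule sym)
    also have "\<dots> = cell_entry lE (R (kk e')) (L ! (kk e' mod n))" using a(3) by (rule arg_cong)
    also have "\<dots> = Some e'" using cell_kk[OF a(2)] .
    finally show "e = e'" by (rule option.inject[THEN iffD1])
  qed
  have "\<exists>e\<in>E. m - 1 \<le> kk e"
  proof (rule ccontr)
    assume "\<not> (\<exists>e\<in>E. m - 1 \<le> kk e)"
    hence "kk ` E \<subseteq> {..<m - 1}" by auto
    hence "card (kk ` E) \<le> card {..<m - 1}" by (intro card_mono) auto
    hence "card (kk ` E) \<le> m - 1" by simp
    moreover have "card (kk ` E) = m" unfolding m_def using card_image[OF inj] .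
    ultimately show False using mpos by simp
  qed
  then obtain e where eE: "e \<in> E" and ke: "m - 1 \<le> kk e" by blast
  have "kk e mod n < n" using npos by simp
  moreover have "kk e div n * n + kk e mod n = kk e" by (rule div_mult_mod_eq)
  moreover have "(kk e div n + 1) * n = kk e div n * n + n" by simp
  ultimately have "kk e < (kk e div n + 1) * n" by linarith
  hence mle: "m \<le> height V lV E lE e * n" using ke height_eq[OF eE] by simp
  have "avg_degree V E / 2 = real m / real n"
    unfolding avg_degree_def m_def n_def by simp
  also have "\<dots> \<le> real (height V lV E lE e)"
  proof -
    have "real m \<le> real (height V lV E lE e * n)" using mle by (simp only: of_nat_le_iff)
    hence "real m \<le> real (height V lV E lE e) * real n" by (simp only: of_nat_mult)
    moreover have "real n > 0" using npos by simp
    ultimately show ?thesis by (simp only: pos_divide_le_eq)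
  qed
  finally show ?thesis using eE by blast
qed

end
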